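(* Let $H$ be a Hilbert space with norm $\|\cdot\|$ and let $\tau>0$. There is a constant $c_{12}\ge 1$, independent of $\tau$, $N$ and the sequence, such that for every sequence $(u^n)_{n\ge 0}$ in $H$ and every $N\ge 2$ the seminorms \[ |(u^n)|_{\tau,1} = \Big(\tau \sum_{n=2}^N \|\dot u^n\|^2 + \tau\|d_t u^1\|^2\Big)^{1/2},\qquad |(u^n)|_{\tau,2} = \Big(\tau\sum_{n=1}^N \|d_t u^n\|^2\Big)^{1/2} \] satisfy $c_{12}^{-1}|(u^n)|_{\tau,1} \le |(u^n)|_{\tau,2} \le c_{12}|(u^n)|_{\tau,1}$.
   Context: For a sequence $(u^n)$ and step size $\tau>0$: $d_t u^n = (u^n-u^{n-1})/\tau$ for $n\ge 1$, and $\dot u^n = \frac{1}{2\tau}(3u^n - 4u^{n-1} + u^{n-2})$ for $n\ge 2$ (the BDF2 difference quotient). *)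

theory Defs
  imports "HOL-Analysis.Analysis"
begin

definition dt :: "real \<Rightarrow> (nat \<Rightarrow> 'a::real_normed_vector) \<Rightarrow> nat \<Rightarrow> 'a" where
  "dt \<tau> u n = (1 / \<tau>) *\<^sub>R (u n - u (n - 1))"

definition bdf2 :: "real \<Rightarrow> (nat \<Rightarrow> 'a::real_normed_vector) \<Rightarrow> nat \<Rightarrow> 'a" where
  "bdf2 \<tau> u n = (1 / (2 * \<tau>)) *\<^sub>R (3 *\<^sub>R u n - 4 *\<^sub>R u (n - 1) + u (n - 2))"

definition seminorm1 :: "real \<Rightarrow> nat \<Rightarrow> (nat \<Rightarrow> 'a::real_normed_vector) \<Rightarrow> real" where
  "seminorm1 \<tau> N u = sqrt (\<tau> * (\<Sum>n=2..N. (norm (bdf2 \<tau> u n))\<^sup>2) + \<tau> * (norm (dt \<tau> u 1))\<^sup>2)"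

definition seminorm2 :: "real \<Rightarrow> nat \<Rightarrow> (nat \<Rightarrow> 'a::real_normed_vector) \<Rightarrow> real" where
  "seminorm2 \<tau> N u = sqrt (\<tau> * (\<Sum>n=1..N. (norm (dt \<tau> u n))\<^sup>2))"

end

theory Submission
  imports Defs
begin

lemma bdf2_dt:
  fixes u :: "nat \<Rightarrow> 'a::real_normed_vector"
  assumes "n \<ge> 2" "\<tau> > 0"
  shows "bdf2 \<tau> u n = (3/2) *\<^sub>R dt \<tau> u n - (1/2) *\<^sub>R dt \<tau> u (n - 1)"
proof -
  have h: "n - 1 - 1 = n - 2" by simp
  have e: "(1 / (2 * \<tau>)) *\<^sub>R w = (1/\<tau>) *\<^sub>R ((1/2) *\<^sub>R w)" for w :: 'a
    by simp
  have f: "(1/2) *\<^sub>R (3 *\<^sub>R x - 4 *\<^sub>R y + z) = (3/2) *\<^sub>R (x - y) - (1/2) *\<^sub>R (y - z)" for x y z :: 'a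
  proof -
    have "(1/2) *\<^sub>R y + (3/2) *\<^sub>R y = 2 *\<^sub>R y"
      by (simp flip: scaleR_add_left)
    then show ?thesis by (simp add: algebra_simps)
  qed
  show ?thesis unfolding bdf2_def dt_def h e f
    by (simp add: scaleR_diff_right mult.commute)
qed

lemma sq_conv:
  fixes x y :: real
  shows "((2/3)*x + (1/3)*y)^2 \<le> (2/3)*x^2 + (1/3)*y^2"
proof -
  have "(2/3)*x^2 + (1/3)*y^2 - ((2/3)*x + (1/3)*y)^2 = (2/9)*(x-y)^2"
    by (simp add: power2_eq_square algebra_simps)
  moreover have "(x-y)^2 \<ge> 0" by simp
  ultimately show ?thesis by linarith
qed

lemma sq_tri:
  fixes x y :: real
  shows "((3/2)*x + (1/2)*y)^2 \<le> (9/2)*x^2 + (1/2)*y^2"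
proof -
  have "(9/2)*x^2 + (1/2)*y^2 - ((3/2)*x + (1/2)*y)^2 = (9/4)*x^2 + (1/4)*y^2 - (3/2)*x*y"
    by (simp add: power2_eq_square algebra_simps)
  also have "\<dots> = ((3/2)*x - (1/2)*y)^2" by (simp add: power2_eq_square algebra_simps)
  finally show ?thesis by (metis diff_ge_0_iff_ge zero_le_power2)
qed

lemma sumA:
  fixes a b :: "nat \<Rightarrow> real"
  assumes "\<And>n. n \<ge> 2 \<Longrightarrow> a n \<le> (2/3) * b n + (1/3) * a (n - 1)" "N \<ge> 1"
  shows "(\<Sum>n=2..N. a n) + a N / 2 \<le> (\<Sum>n=2..N. b n) + a 1 / 2"
  using assms(2)
proof (induction N rule: dec_induct)
  case base then show ?case by simp
next
  case (step m)
  have "a (Suc m) \<le> (2/3) * b (Suc m) + (1/3) * a m" using assms(1)[of "Suc m"] step by simp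
  moreover have "(\<Sum>n=2..Suc m. a n) = (\<Sum>n=2..m. a n) + a (Suc m)"
    using step by (simp add: sum.atLeast_Suc_atMost_Suc_shift)
  moreover have "(\<Sum>n=2..Suc m. b n) = (\<Sum>n=2..m. b n) + b (Suc m)"
    using step by simp
  ultimately show ?case using step by linarith
qed

lemma sumB:
  fixes a b :: "nat \<Rightarrow> real"
  assumes "\<And>n. n \<ge> 2 \<Longrightarrow> b n \<le> (9/2) * a n + (1/2) * a (n - 1)" "N \<ge> 1"
    "\<And>n. a n \<ge> 0"
  shows "(\<Sum>n=2..N. b n) \<le> 5 * (\<Sum>n=1..N. a n) - a N / 2"
  using assms(2)
proof (induction N rule: dec_induct)
  case base then show ?case using assms(3)[of 1] by simp
next
  case (step m)
  have "b (Suc m) \<le> (9/2) * a (Suc m) + (1/2) * a m" using assms(1)[of "Suc m"] step by simp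
  moreover have "(\<Sum>n=1..Suc m. a n) = (\<Sum>n=1..m. a n) + a (Suc m)"
    using step by simp
  moreover have "(\<Sum>n=2..Suc m. b n) = (\<Sum>n=2..m. b n) + b (Suc m)"
    using step by simp
  ultimately show ?case using step by linarith
qed

theorem lemma2p1:
  "\<exists>c12::real. c12 \<ge> 1 \<and>
     (\<forall>\<tau>::real. \<forall>N::nat. \<forall>u::nat \<Rightarrow> 'a::{real_inner, complete_space}.
        \<tau> > 0 \<longrightarrow> N \<ge> 2 \<longrightarrow>
        seminorm1 \<tau> N u / c12 \<le> seminorm2 \<tau> N u \<and>
        seminorm2 \<tau> N u \<le> c12 * seminorm1 \<tau> N u)"
proof (intro exI[of _ 3] conjI allI impI)
  fix \<tau> :: real and N :: nat and u :: "nat \<Rightarrow> 'a"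
  assume tp: "\<tau> > 0" and N: "N \<ge> 2"
  define a where "a n = (norm (dt \<tau> u n))^2" for n
  define b where "b n = (norm (bdf2 \<tau> u n))^2" for n
  have a0: "a n \<ge> 0" for n unfolding a_def by simp
  have hb: "b n \<le> (9/2) * a n + (1/2) * a (n - 1)" if "n \<ge> 2" for n
  proof -
    have "norm (bdf2 \<tau> u n) \<le> (3/2) * norm (dt \<tau> u n) + (1/2) * norm (dt \<tau> u (n-1))"
      using bdf2_dt[OF that tp, of u] norm_triangle_ineq4[of "(3/2) *\<^sub>R dt \<tau> u n" "(1/2) *\<^sub>R dt \<tau> u (n - 1)"]
      by simp
    then have "b n \<le> ((3/2) * norm (dt \<tau> u n) + (1/2) * norm (dt \<tau> u (n-1)))^2"
      unfolding b_def by (simp add: power_mono)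
    then show ?thesis using sq_tri unfolding a_def by (meson order_trans)
  qed
  have ha: "a n \<le> (2/3) * b n + (1/3) * a (n - 1)" if "n \<ge> 2" for n
  proof -
    have "dt \<tau> u n = (2/3) *\<^sub>R bdf2 \<tau> u n + (1/3) *\<^sub>R dt \<tau> u (n - 1)"
    proof -
      have "dt \<tau> u n = (2/3) *\<^sub>R ((3/2) *\<^sub>R dt \<tau> u n)" by simp
      also have "(3/2) *\<^sub>R dt \<tau> u n = bdf2 \<tau> u n + (1/2) *\<^sub>R dt \<tau> u (n - 1)"
        using bdf2_dt[OF that tp, of u] by simp
      finally show ?thesis by (simp add: scaleR_add_right)
    qed
    then have "norm (dt \<tau> u n) \<le> (2/3) * norm (bdf2 \<tau> u n) + (1/3) * norm (dt \<tau> u (n-1))"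
      using norm_triangle_ineq[of "(2/3) *\<^sub>R bdf2 \<tau> u n" "(1/3) *\<^sub>R dt \<tau> u (n - 1)"]
      by simp
    then have "a n \<le> ((2/3) * norm (bdf2 \<tau> u n) + (1/3) * norm (dt \<tau> u (n-1)))^2"
      unfolding a_def by (simp add: power_mono)
    then show ?thesis using sq_conv unfolding a_def b_def by (meson order_trans)
  qed
  have N1: "N \<ge> 1" using N by simp
  have A: "(\<Sum>n=2..N. a n) + a N / 2 \<le> (\<Sum>n=2..N. b n) + a 1 / 2" using sumA[of a b N] ha N1 by blast
  have B: "(\<Sum>n=2..N. b n) \<le> 5 * (\<Sum>n=1..N. a n) - a N / 2" using sumB[of b a N] hb N1 a0 by blast
  have split: "(\<Sum>n=1..N. a n) = a 1 + (\<Sum>n=2..N. a n)"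
    using N1 by (simp add: sum.atLeast_Suc_atMost numeral_2_eq_2)
  have s1: "seminorm1 \<tau> N u = sqrt (\<tau> * ((\<Sum>n=2..N. b n) + a 1))"
    unfolding seminorm1_def a_def b_def by (simp add: algebra_simps)
  have s2: "seminorm2 \<tau> N u = sqrt (\<tau> * (\<Sum>n=1..N. a n))"
    unfolding seminorm2_def a_def by simp
  have S1: "(\<Sum>n=2..N. b n) + a 1 \<le> 9 * (\<Sum>n=1..N. a n)"
  proof -
    have "sum a {2..N} \<ge> 0" by (rule sum_nonneg) (use a0 in auto)
    then show ?thesis using B split a0[of N] a0[of 1] by linarith
  qed
  have S2: "(\<Sum>n=1..N. a n) \<le> 9 * ((\<Sum>n=2..N. b n) + a 1)"
  proof -
    have "sum b {2..N} \<ge> 0" by (rule sum_nonneg) (simp add: b_def)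
    then show ?thesis using A split a0[of N] a0[of 1] by (simp add: distrib_left)
  qed
  have "seminorm1 \<tau> N u \<le> sqrt (9 * (\<tau> * (\<Sum>n=1..N. a n)))"
    unfolding s1 using S1 tp by (simp add: real_sqrt_le_iff)
  also have "\<dots> = 3 * seminorm2 \<tau> N u" unfolding s2 real_sqrt_mult by simp
  finally show "seminorm1 \<tau> N u / 3 \<le> seminorm2 \<tau> N u" by simp
  have "seminorm2 \<tau> N u \<le> sqrt (9 * (\<tau> * ((\<Sum>n=2..N. b n) + a 1)))"
    unfolding s2 using S2 tp by (simp add: real_sqrt_le_iff)
  also have "\<dots> = 3 * seminorm1 \<tau> N u" unfolding s1 real_sqrt_mult by simp
  finally show "seminorm2 \<tau> N u \<le> 3 * seminorm1 \<tau> N u" .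
qed simp

end
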